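(* Let $g=(g_1,\dots,g_\ell):\mathbb{R}^r\to\mathbb{R}^\ell$ and $m=(m_1,\dots,m_\ell):\mathcal{A}\to\mathbb{R}^\ell$ ($\mathcal A\subset\mathbb{R}^s$) be given, let $\{P_1(\cdot|\theta):\theta\in\Theta\}$, $\Theta\subset\mathbb{R}^d$, be a parametric family of probability measures on $\mathbb{R}^r$, and for $\alpha\in\mathcal A$ let $\mathcal{M}_\alpha=\{Q$ finite signed measure$:\int dQ=1,\ \int g\,dQ=m(\alpha)\}$ and $\mathcal M=\bigcup_{\alpha\in\mathcal A}\mathcal M_\alpha$. Let $P_T=P(\cdot|\phi^* )=\lambda^*P_1(\cdot|\theta^* )+(1-\lambda^* )P_0^*$ with $\phi^*=(\lambda^*,\theta^*,\alpha^* )$, $\lambda^*\in(0,1)$, so that $P_0^*=\frac{1}{1-\lambda^*}P_T-\frac{\lambda^*}{1-\lambda^*}P_1(\cdot|\theta^* )$. Let $$\mathcal N=\Big\{Q \text{ probability measure}:\ Q=\tfrac{1}{1-\lambda}P_T-\tfrac{\lambda}{1-\lambda}P_1(\cdot|\theta),\ \lambda\in(0,1),\ \theta\in\Theta\Big\}.$$ Assume that $P_0^*\in\mathcal M$ and that: (1) the system of equations $\int g_i(x)\big(dP(x|\phi^* )-\lambda\,dP_1(x|\theta)\big)=(1-\lambda)m_i(\alpha)$, $i=1,\dots,\ell$, has a unique solution $(\lambda^*,\theta^*,\alpha^* )$; (2) the function $\alpha\mapsto m(\alpha)$ is one-to-one; (3) for every $\theta\in\Theta$, $\lim_{\|x\|\to\infty}\frac{dP_1(x|\theta)}{dP_T(x)}=c$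 for some $c\in[0,\infty)\setminus\{1\}$; (4) the parametric component is identifiable: if $P_1(\cdot|\theta)=P_1(\cdot|\theta')$ $dP_T$-a.e., then $\theta=\theta'$. Then $\mathcal N\cap\mathcal M$ contains a unique measure, namely $P_0^*$, and there exists a unique vector $(\lambda^*,\theta^*,\alpha^* )$ such that $P_T=\lambda^*P_1(\cdot|\theta^* )+(1-\lambda^* )P_0^*$ with $P_0^*=\frac{1}{1-\lambda^*}P_T-\frac{\lambda^*}{1-\lambda^*}P_1(\cdot|\theta^* )\in\mathcal M_{\alpha^*}$.
   Context: $\frac{dP_1(\cdot|\theta)}{dP_T}$ denotes the Radon–Nikodym derivative. $P_T$ is the true distribution generating the data. *)

theory Defs
  imports "HOL-Probability.Probability"
begin

text \<open>Finite signed measures on the Borel sets of a topological space are represented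
  by their (real-valued) set functions.\<close>

definition sm_decomp :: "'x::topological_space measure \<Rightarrow> 'x measure \<Rightarrow> ('x set \<Rightarrow> real) \<Rightarrow> bool" where
  "sm_decomp \<mu> \<nu> Q \<longleftrightarrow> sets \<mu> = sets borel \<and> sets \<nu> = sets borel \<and>
     finite_measure \<mu> \<and> finite_measure \<nu> \<and>
     (\<forall>A\<in>sets borel. Q A = measure \<mu> A - measure \<nu> A)"

definition finite_signed_measure :: "('x::topological_space set \<Rightarrow> real) \<Rightarrow> bool" where
  "finite_signed_measure Q \<longleftrightarrow> (\<exists>\<mu> \<nu>. sm_decomp \<mu> \<nu> Q)"

text \<open>\<open>\<integral> f dQ = I\<close> for a finite signed measure \<open>Q\<close> (with \<open>f\<close> integrable w.r.t. the
  variation of \<open>Q\<close>; the value does not depend on the chosen decomposition).\<close>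
definition has_sm_integral :: "('x::topological_space set \<Rightarrow> real) \<Rightarrow> ('x \<Rightarrow> real) \<Rightarrow> real \<Rightarrow> bool" where
  "has_sm_integral Q f I \<longleftrightarrow> (\<exists>\<mu> \<nu>. sm_decomp \<mu> \<nu> Q \<and> integrable \<mu> f \<and> integrable \<nu> f \<and>
     I = integral\<^sup>L \<mu> f - integral\<^sup>L \<nu> f)"

definition M_alpha :: "('x::topological_space \<Rightarrow> real ^ 'l) \<Rightarrow> ('a \<Rightarrow> real ^ 'l) \<Rightarrow> 'a \<Rightarrow> ('x set \<Rightarrow> real) set" where
  "M_alpha g m \<alpha> = {Q. finite_signed_measure Q \<and> has_sm_integral Q (\<lambda>x. 1) 1 \<and>
     (\<forall>i. has_sm_integral Q (\<lambda>x. g x $ i) (m \<alpha> $ i))}"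

definition M_set :: "('x::topological_space \<Rightarrow> real ^ 'l) \<Rightarrow> ('a \<Rightarrow> real ^ 'l) \<Rightarrow> 'a set \<Rightarrow> ('x set \<Rightarrow> real) set" where
  "M_set g m \<A> = (\<Union>\<alpha>\<in>\<A>. M_alpha g m \<alpha>)"

definition comp0 :: "'x measure \<Rightarrow> ('t \<Rightarrow> 'x measure) \<Rightarrow> real \<Rightarrow> 't \<Rightarrow> 'x set \<Rightarrow> real" where
  "comp0 PT P1 lam \<theta> A = measure PT A / (1 - lam) - lam / (1 - lam) * measure (P1 \<theta>) A"

definition N_set :: "'x::topological_space measure \<Rightarrow> ('t \<Rightarrow> 'x measure) \<Rightarrow> 't set \<Rightarrow> 'x measure set" where
  "N_set PT P1 \<Theta> = {Q. prob_space Q \<and> sets Q = sets borel \<and>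
     (\<exists>lam\<in>{0<..<1}. \<exists>\<theta>\<in>\<Theta>. \<forall>A\<in>sets borel. measure Q A = comp0 PT P1 lam \<theta> A)}"

end

theory Submission
  imports Defs
begin

lemma sm_decomp_scale:
  assumes "sm_decomp \<mu> \<nu> Q" "c > 0" "\<forall>A\<in>sets borel. Q' A = c * Q A"
  shows "sm_decomp (density \<mu> (\<lambda>_. ennreal c)) (density \<nu> (\<lambda>_. ennreal c)) Q'"
proof -
  interpret m: finite_measure \<mu> using assms(1) by (simp add: sm_decomp_def)
  interpret n: finite_measure \<nu> using assms(1) by (simp add: sm_decomp_def)
  have fm: "finite_measure (density M (\<lambda>_. ennreal c))" if "finite_measure M" for M :: "'a measure"
  proof -
    interpret finite_measure M by fact
    show ?thesis
      by (rule finite_measureI) (simp add: emeasure_density_const ennreal_mult_eq_top_iff)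
  qed
  show ?thesis using assms unfolding sm_decomp_def
    by (auto simp: fm measure_density_const right_diff_distrib)
qed

lemma has_sm_integral_scale:
  assumes "has_sm_integral Q f I" "c > 0" "\<forall>A\<in>sets borel. Q' A = c * Q A"
  shows "has_sm_integral Q' f (c * I)"
proof -
  obtain \<mu> \<nu> where d: "sm_decomp \<mu> \<nu> Q" and i: "integrable \<mu> f" "integrable \<nu> f"
    and I: "I = integral\<^sup>L \<mu> f - integral\<^sup>L \<nu> f"
    using assms(1) unfolding has_sm_integral_def by blast
  have int: "integrable (density M (\<lambda>_. c)) f" "integral\<^sup>L (density M (\<lambda>_. c)) f = c * integral\<^sup>L M f"
    if "integrable M f" for M :: "'a measure"
  proof -
    have [measurable]: "f \<in> borel_measurable M" using that by auto
    show "integrable (density M (\<lambda>_. c)) f"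
      using that assms(2) by (subst integrable_density) auto
    show "integral\<^sup>L (density M (\<lambda>_. c)) f = c * integral\<^sup>L M f"
      using assms(2) by (subst integral_density) auto
  qed
  show ?thesis unfolding has_sm_integral_def
    apply (rule exI[of _ "density \<mu> (\<lambda>_. ennreal c)"], rule exI[of _ "density \<nu> (\<lambda>_. ennreal c)"])
    using sm_decomp_scale[OF d assms(2,3)] int[OF i(1)] int[OF i(2)] I
    by (simp add: right_diff_distrib)
qed


lemma M_alpha_transfer:
  assumes "Q \<in> M_alpha g m \<alpha>" "\<forall>A\<in>sets borel. Q' A = Q A"
  shows "Q' \<in> M_alpha g m \<alpha>"
proof -
  have *: "has_sm_integral Q' f I" if "has_sm_integral Q f I" for f I
    using has_sm_integral_scale[OF that, of 1 Q'] assms(2) by simp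
  have "has_sm_integral Q' (\<lambda>x. 1) 1" using * assms(1) by (auto simp: M_alpha_def)
  then have "finite_signed_measure Q'" by (auto simp: has_sm_integral_def finite_signed_measure_def)
  then show ?thesis using * assms(1) \<open>has_sm_integral Q' (\<lambda>x. 1) 1\<close> by (auto simp: M_alpha_def)
qed

lemma comp0_mult:
  assumes "lam < 1"
  shows "(1 - lam) * comp0 PT P1 lam \<theta> A = measure PT A - lam * measure (P1 \<theta>) A"
proof -
  have "1 - lam \<noteq> 0" using assms by simp
  then show ?thesis unfolding comp0_def by (simp add: right_diff_distrib)
qed

lemma key:
  assumes "Q \<in> M_alpha g m \<alpha>" "\<forall>A\<in>sets borel. Q A = comp0 PT P1 lam \<theta> A" "lam \<in> {0<..<1}"
  shows "\<forall>i. has_sm_integral (\<lambda>A. measure PT A - lam * measure (P1 \<theta>) A)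
                (\<lambda>x. g x $ i) ((1 - lam) * m \<alpha> $ i)"
proof
  fix i
  have c: "1 - lam > 0" using assms(3) by auto
  have "\<forall>A\<in>sets borel. measure PT A - lam * measure (P1 \<theta>) A = (1 - lam) * Q A"
    using assms(2) comp0_mult[of lam PT P1 \<theta>] c by auto
  moreover have h: "has_sm_integral Q (\<lambda>x. g x $ i) (m \<alpha> $ i)" using assms(1) by (auto simp: M_alpha_def)
  ultimately have "has_sm_integral (\<lambda>A. measure PT A - lam * measure (P1 \<theta>) A)
                (\<lambda>x. g x $ i) ((1 - lam) * (m \<alpha> $ i))"
    using has_sm_integral_scale[OF h c, of "\<lambda>A. measure PT A - lam * measure (P1 \<theta>) A"] by blast
  then show "has_sm_integral (\<lambda>A. measure PT A - lam * measure (P1 \<theta>) A)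
                (\<lambda>x. g x $ i) ((1 - lam) * m \<alpha> $ i)"
    by simp
qed

theorem proposition2:
  fixes g :: "real ^ 'r \<Rightarrow> real ^ 'l"
    and m :: "real ^ 's \<Rightarrow> real ^ 'l"
    and \<A> :: "(real ^ 's) set"
    and \<Theta> :: "(real ^ 'd) set"
    and P1 :: "real ^ 'd \<Rightarrow> (real ^ 'r) measure"
    and PT P0 :: "(real ^ 'r) measure"
    and lams :: real and \<theta>s :: "real ^ 'd" and \<alpha>s :: "real ^ 's"
  assumes P1_prob: "\<forall>\<theta>\<in>\<Theta>. prob_space (P1 \<theta>) \<and> sets (P1 \<theta>) = sets borel"
    and PT_prob: "prob_space PT" "sets PT = sets borel"
    and P0_prob: "prob_space P0" "sets P0 = sets borel"
    and params: "lams \<in> {0<..<1}" "\<theta>s \<in> \<Theta>" "\<alpha>s \<in> \<A>"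
    and mixture: "\<forall>A\<in>sets borel. measure PT A = lams * measure (P1 \<theta>s) A + (1 - lams) * measure P0 A"
    and P0_in_M: "measure P0 \<in> M_set g m \<A>"
    and unique_solution:
      "\<forall>lam\<in>{0<..<1}. \<forall>\<theta>\<in>\<Theta>. \<forall>\<alpha>\<in>\<A>.
         (\<forall>i. has_sm_integral (\<lambda>A. measure PT A - lam * measure (P1 \<theta>) A)
                (\<lambda>x. g x $ i) ((1 - lam) * m \<alpha> $ i))
         \<longleftrightarrow> (lam, \<theta>, \<alpha>) = (lams, \<theta>s, \<alpha>s)"
    and m_inj: "inj_on m \<A>"
    and tail_ratio:
      "\<forall>\<theta>\<in>\<Theta>. \<exists>c::real. c \<ge> 0 \<and> c \<noteq> 1 \<and>
         (\<exists>f\<in>borel_measurable borel. (\<forall>x. f x \<ge> 0) \<and>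
             P1 \<theta> = density PT (\<lambda>x. ennreal (f x)) \<and> (f \<longlongrightarrow> c) at_infinity)"
    and identifiable:
      "\<forall>\<theta>\<in>\<Theta>. \<forall>\<theta>'\<in>\<Theta>.
         (AE x in PT. RN_deriv PT (P1 \<theta>) x = RN_deriv PT (P1 \<theta>') x) \<longrightarrow> \<theta> = \<theta>'"
  shows "{Q \<in> N_set PT P1 \<Theta>. measure Q \<in> M_set g m \<A>} = {P0}
    \<and> (\<forall>\<phi>. (\<phi> \<in> {0<..<1} \<times> \<Theta> \<times> \<A> \<and>
             (case \<phi> of (lam, \<theta>, \<alpha>) \<Rightarrow>
                (\<forall>A\<in>sets borel. measure PT A
                    = lam * measure (P1 \<theta>) A + (1 - lam) * comp0 PT P1 lam \<theta> A)
                \<and> comp0 PT P1 lam \<theta> \<in> M_alpha g m \<alpha>))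
           \<longleftrightarrow> \<phi> = (lams, \<theta>s, \<alpha>s))"
  proof -
  have lams: "0 < lams" "lams < 1" using params(1) by auto
  have P0comp: "\<forall>A\<in>sets borel. measure P0 A = comp0 PT P1 lams \<theta>s A"
  proof
    fix A :: "(real ^ 'r) set" assume A: "A \<in> sets borel"
    have "(1 - lams) * measure P0 A = (1 - lams) * comp0 PT P1 lams \<theta>s A"
      using comp0_mult[of lams PT P1 \<theta>s A] mixture A lams by auto
    then show "measure P0 A = comp0 PT P1 lams \<theta>s A" using lams by simp
  qed
  obtain \<alpha>0 where a0: "\<alpha>0 \<in> \<A>" "measure P0 \<in> M_alpha g m \<alpha>0"
    using P0_in_M by (auto simp: M_set_def)
  have "\<alpha>0 = \<alpha>s"
    using unique_solution[rule_format, OF params(1,2) a0(1)] key[OF a0(2) P0comp params(1)] by simp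
  with a0 have P0a: "measure P0 \<in> M_alpha g m \<alpha>s" by simp
  have part1: "{Q \<in> N_set PT P1 \<Theta>. measure Q \<in> M_set g m \<A>} = {P0}"
  proof
    show "{P0} \<subseteq> {Q \<in> N_set PT P1 \<Theta>. measure Q \<in> M_set g m \<A>}"
    proof -
      have "P0 \<in> N_set PT P1 \<Theta>"
      proof -
        have "\<exists>lam\<in>{0<..<1}. \<exists>\<theta>\<in>\<Theta>. \<forall>A\<in>sets borel. measure P0 A = comp0 PT P1 lam \<theta> A"
          by (rule bexI[OF _ params(1)], rule bexI[OF _ params(2)], rule P0comp)
        then show ?thesis unfolding N_set_def using P0_prob by (intro CollectI conjI)
      qed
      then show ?thesis using P0_in_M by simp
    qed
  next
    show "{Q \<in> N_set PT P1 \<Theta>. measure Q \<in> M_set g m \<A>} \<subseteq> {P0}"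
    proof
      fix Q assume Q: "Q \<in> {Q \<in> N_set PT P1 \<Theta>. measure Q \<in> M_set g m \<A>}"
      then obtain lam \<theta> \<alpha> where l: "lam \<in> {0<..<1}" "\<theta> \<in> \<Theta>" "\<alpha> \<in> \<A>"
        and eq: "\<forall>A\<in>sets borel. measure Q A = comp0 PT P1 lam \<theta> A"
        and inM: "measure Q \<in> M_alpha g m \<alpha>" and Qp: "prob_space Q" "sets Q = sets borel"
        by (auto simp: N_set_def M_set_def)
      have "(lam, \<theta>, \<alpha>) = (lams, \<theta>s, \<alpha>s)"
        using unique_solution[rule_format, OF l] key[OF inM eq l(1)] by simp
      then have "\<forall>A\<in>sets borel. measure Q A = measure P0 A" using eq P0comp by auto
      then have "Q = P0"
      proof -
        assume e: "\<forall>A\<in>sets borel. measure Q A = measure P0 A"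
        interpret q: prob_space Q by (rule Qp(1))
        interpret p: prob_space P0 by (rule P0_prob(1))
        show "Q = P0"
          by (rule measure_eqI) (use Qp P0_prob e in \<open>auto simp: q.emeasure_eq_measure p.emeasure_eq_measure\<close>)
      qed
      then show "Q \<in> {P0}" by simp
    qed
  qed
  have part2: "(\<phi> \<in> {0<..<1} \<times> \<Theta> \<times> \<A> \<and>
             (case \<phi> of (lam, \<theta>, \<alpha>) \<Rightarrow>
                (\<forall>A\<in>sets borel. measure PT A
                    = lam * measure (P1 \<theta>) A + (1 - lam) * comp0 PT P1 lam \<theta> A)
                \<and> comp0 PT P1 lam \<theta> \<in> M_alpha g m \<alpha>))
           \<longleftrightarrow> \<phi> = (lams, \<theta>s, \<alpha>s)" for \<phi>
  proof
    assume a: "\<phi> \<in> {0<..<1} \<times> \<Theta> \<times> \<A> \<and>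
             (case \<phi> of (lam, \<theta>, \<alpha>) \<Rightarrow>
                (\<forall>A\<in>sets borel. measure PT A
                    = lam * measure (P1 \<theta>) A + (1 - lam) * comp0 PT P1 lam \<theta> A)
                \<and> comp0 PT P1 lam \<theta> \<in> M_alpha g m \<alpha>)"
    obtain lam \<theta> \<alpha> where phi: "\<phi> = (lam, \<theta>, \<alpha>)" by (cases \<phi>) auto
    with a have l: "lam \<in> {0<..<1}" "\<theta> \<in> \<Theta>" "\<alpha> \<in> \<A>"
      and inM: "comp0 PT P1 lam \<theta> \<in> M_alpha g m \<alpha>" by auto
    have "(lam, \<theta>, \<alpha>) = (lams, \<theta>s, \<alpha>s)"
      using unique_solution[rule_format, OF l] key[OF inM _ l(1), of PT P1 \<theta>] by simp
    then show "\<phi> = (lams, \<theta>s, \<alpha>s)" using phi by simp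
  next
    assume phi: "\<phi> = (lams, \<theta>s, \<alpha>s)"
    have "comp0 PT P1 lams \<theta>s \<in> M_alpha g m \<alpha>s"
      using M_alpha_transfer[OF P0a] P0comp by auto
    moreover have "\<forall>A\<in>sets borel. measure PT A
                    = lams * measure (P1 \<theta>s) A + (1 - lams) * comp0 PT P1 lams \<theta>s A"
      using lams comp0_mult[of lams PT P1 \<theta>s] by auto
    ultimately show "\<phi> \<in> {0<..<1} \<times> \<Theta> \<times> \<A> \<and>
             (case \<phi> of (lam, \<theta>, \<alpha>) \<Rightarrow>
                (\<forall>A\<in>sets borel. measure PT A
                    = lam * measure (P1 \<theta>) A + (1 - lam) * comp0 PT P1 lam \<theta> A)
                \<and> comp0 PT P1 lam \<theta> \<in> M_alpha g m \<alpha>)"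
      using phi params by auto
  qed
  show ?thesis using part1 part2 by blast
qed

end
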